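(* Fix a filtration $\{Q(C;\alpha)\}$ of simplicial complexes on a finite cloud $C$ in a metric space. For every $\alpha>0$, the reduced skeleton $\mathrm{HoPeS}(C;\alpha)$ has the minimum total length of edges over all graphs $G\subseteq Q(C;\alpha)$ that span $Q(C;\alpha)$ and for which the inclusion induces an isomorphism $H_1(G;\mathbb{Z}_2)\to H_1(Q(C;\alpha);\mathbb{Z}_2)$ (and $\mathrm{HoPeS}(C;\alpha)$ itself is such a graph).
   Context: A filtration on a finite set $C$: nested finite simplicial complexes $Q(C;\alpha)$, $\alpha\ge0$, with vertex set $C$, $Q(C;0)=C$, each simplex entering at a minimal scale; final complex connected. Edge length $|e|=2\min\{\alpha:e\subset Q(C;\alpha)\}$. $\mathrm{MST}(C)$ is a minimum total length spanning tree on $C$ using filtration edges; $\mathrm{MST}(C;\alpha)$ removes all open edges of length $>2\alpha$. A graph $G$ spans a complex $Q$ on $C$ if $G$ has vertex set $C$, every edge of $G$ is in $Q$, and the inclusion induces a bijection on connected components. Homology with $\mathbb{Z}_2$ coefficients. An edge is critical if its addition creates a new class in $H_1$ that does not immediately die; its birth is its entry scale. Deaths of critical edges: at scale $\alpha$, let $K_1,\dots,K_s$ be the critical edges with birth $\le\alpha$ not yet assigned a death; $[K_1],\dots,[K_s]$ form a basis of $H_1((\mathrm{MST}(C;\alpha)\cup\bigcup K_j)/\mathrm{MST}(C;\alpha))$; let $f$ be the map into $H_1(Q(C;\alpha)/\mathrm{MST}(C;\alpha))$ induced by inclusion; take a basis $b_1,\dots,b_r$ of $\ker f$, $b_i=\sum_jc_{ij}[K_j]$,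 and solve $\sum_jc_{ij}x_j=0$ over $\mathbb{Z}_2$ with $r$ leading variables chosen by the elder rule (the leading set whose critical edges have greatest combined birth; any choice among ties); each $K_i$ with $i$ leading gets death $\alpha$. $\mathrm{HoPeS}(C)$ is the union of $\mathrm{MST}(C)$ and all critical edges labelled by (birth, death). The reduced skeleton $\mathrm{HoPeS}(C;\alpha)$ is obtained from $\mathrm{HoPeS}(C)$ by removing all edges of length $>2\alpha$ and all critical edges with death $\le\alpha$. *)

theory Defs
  imports Complex_Main
begin

text \<open>A Z2-chain is a set of simplices
  (addition = symmetric difference).\<close>

definition faces1 :: "'a set \<Rightarrow> 'a set set" where
  "faces1 \<sigma> = (\<lambda>v. \<sigma> - {v}) ` \<sigma>"

definition bd :: "'a set set \<Rightarrow> 'a set set" where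
  "bd c = {\<tau>. odd (card {\<sigma>\<in>c. \<tau> \<in> faces1 \<sigma>})}"

definition edges_of :: "'a set set \<Rightarrow> 'a set set" where
  "edges_of K = {\<sigma>\<in>K. card \<sigma> = 2}"

definition tris_of :: "'a set set \<Rightarrow> 'a set set" where
  "tris_of K = {\<sigma>\<in>K. card \<sigma> = 3}"

definition conn :: "'a set set \<Rightarrow> 'a \<Rightarrow> 'a \<Rightarrow> bool" where
  "conn E u v \<longleftrightarrow> (u, v) \<in> {(x, y). {x, y} \<in> E}\<^sup>*"

text \<open>A filtration on the finite set C is given by the finite simplicial complex S
  (the final complex) and the entry scale ent of each simplex;
  Q(C;alpha) = {sigma in S. ent sigma <= alpha}.\<close>

definition filtration :: "'a set \<Rightarrow> 'a set set \<Rightarrow> ('a set \<Rightarrow> real) \<Rightarrow> bool" where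
  "filtration C S ent \<longleftrightarrow>
     finite C \<and>
     (\<forall>\<sigma>\<in>S. \<sigma> \<noteq> {} \<and> finite \<sigma> \<and> \<sigma> \<subseteq> C) \<and>
     (\<forall>\<sigma>\<in>S. \<forall>\<tau>. \<tau> \<subseteq> \<sigma> \<and> \<tau> \<noteq> {} \<longrightarrow> \<tau> \<in> S) \<and>
     (\<forall>v\<in>C. {v} \<in> S \<and> ent {v} = 0) \<and>
     (\<forall>\<sigma>\<in>S. card \<sigma> \<ge> 2 \<longrightarrow> ent \<sigma> > 0) \<and>
     (\<forall>\<sigma>\<in>S. \<forall>\<tau>. \<tau> \<subseteq> \<sigma> \<and> \<tau> \<noteq> {} \<longrightarrow> ent \<tau> \<le> ent \<sigma>) \<and>
     (\<forall>u\<in>C. \<forall>v\<in>C. conn (edges_of S) u v)"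

definition Qf :: "'a set set \<Rightarrow> ('a set \<Rightarrow> real) \<Rightarrow> real \<Rightarrow> 'a set set" where
  "Qf S ent \<alpha> = {\<sigma>\<in>S. ent \<sigma> \<le> \<alpha>}"

text \<open>Edge length |e| = 2 * (entry scale of e); total length of a graph.\<close>
definition total_len :: "('a set \<Rightarrow> real) \<Rightarrow> 'a set set \<Rightarrow> real" where
  "total_len ent E = (\<Sum>e\<in>E. 2 * ent e)"

definition spanning_tree :: "'a set \<Rightarrow> 'a set set \<Rightarrow> 'a set set \<Rightarrow> bool" where
  "spanning_tree C S T \<longleftrightarrow>
     T \<subseteq> edges_of S \<and>
     (\<forall>u\<in>C. \<forall>v\<in>C. conn T u v) \<and>
     (\<forall>e\<in>T. \<forall>u v. e = {u, v} \<longrightarrow> \<not> conn (T - {e}) u v)"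

definition is_MST :: "'a set \<Rightarrow> 'a set set \<Rightarrow> ('a set \<Rightarrow> real) \<Rightarrow> 'a set set \<Rightarrow> bool" where
  "is_MST C S ent T \<longleftrightarrow> spanning_tree C S T \<and>
     (\<forall>T'. spanning_tree C S T' \<longrightarrow> total_len ent T \<le> total_len ent T')"

text \<open>MST(C;alpha): MST edges of length at most 2 alpha (vertex set C is implicit).\<close>
definition MST_at :: "('a set \<Rightarrow> real) \<Rightarrow> 'a set set \<Rightarrow> real \<Rightarrow> 'a set set" where
  "MST_at ent T \<alpha> = {e\<in>T. ent e \<le> \<alpha>}"

text \<open>Candidate edges: filtration edges not in the MST. dth e = Some t means death t,
  None means death = infinity. Birth of e is ent e.\<close>

definition cand :: "'a set set \<Rightarrow> 'a set set \<Rightarrow> 'a set set" where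
  "cand S T = edges_of S - T"

definition unassigned ::
  "'a set set \<Rightarrow> ('a set \<Rightarrow> real) \<Rightarrow> 'a set set \<Rightarrow> ('a set \<Rightarrow> real option) \<Rightarrow> real \<Rightarrow> 'a set set" where
  "unassigned S ent T dth \<alpha> =
     {e\<in>cand S T. ent e \<le> \<alpha> \<and> (\<forall>t. dth e = Some t \<longrightarrow> \<alpha> \<le> t)}"

text \<open>The kernel of f: subsets A of the unassigned edges (i.e. Z2 combinations) whose
  class in H1(Q(C;alpha)/MST(C;alpha)) vanishes: A = boundary of a 2-chain of Q(C;alpha)
  plus a 1-chain of MST(C;alpha).\<close>
definition kerf ::
  "'a set set \<Rightarrow> ('a set \<Rightarrow> real) \<Rightarrow> 'a set set \<Rightarrow> ('a set \<Rightarrow> real option) \<Rightarrow> real \<Rightarrow> 'a set set set" where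
  "kerf S ent T dth \<alpha> =
     {A. A \<subseteq> unassigned S ent T dth \<alpha> \<and>
         (\<exists>d. d \<subseteq> tris_of (Qf S ent \<alpha>) \<and> (A - bd d) \<union> (bd d - A) \<subseteq> MST_at ent T \<alpha>)}"

text \<open>A set L of r = dim ker f leading variables: the coordinate projection of ker f
  onto L is a bijection, i.e. the columns L of the coefficient matrix form an
  invertible r x r submatrix.\<close>
definition leading ::
  "'a set set \<Rightarrow> ('a set \<Rightarrow> real) \<Rightarrow> 'a set set \<Rightarrow> ('a set \<Rightarrow> real option) \<Rightarrow> real \<Rightarrow> 'a set set \<Rightarrow> bool" where
  "leading S ent T dth \<alpha> L \<longleftrightarrow>
     L \<subseteq> unassigned S ent T dth \<alpha> \<and>
     bij_betw (\<lambda>A. A \<inter> L) (kerf S ent T dth \<alpha>) (Pow L)"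

definition valid_deaths ::
  "'a set set \<Rightarrow> ('a set \<Rightarrow> real) \<Rightarrow> 'a set set \<Rightarrow> ('a set \<Rightarrow> real option) \<Rightarrow> bool" where
  "valid_deaths S ent T dth \<longleftrightarrow>
     (\<forall>e. e \<notin> cand S T \<longrightarrow> dth e = None) \<and>
     (\<forall>\<alpha>. let D = {e\<in>cand S T. dth e = Some \<alpha>} in
        D \<subseteq> unassigned S ent T dth \<alpha> \<and>
        leading S ent T dth \<alpha> D \<and>
        (\<forall>L. leading S ent T dth \<alpha> L \<longrightarrow> (\<Sum>e\<in>L. ent e) \<le> (\<Sum>e\<in>D. ent e)))"

definition critical ::
  "'a set set \<Rightarrow> ('a set \<Rightarrow> real) \<Rightarrow> 'a set set \<Rightarrow> ('a set \<Rightarrow> real option) \<Rightarrow> 'a set \<Rightarrow> bool" where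
  "critical S ent T dth e \<longleftrightarrow> e \<in> cand S T \<and> (\<forall>t. dth e = Some t \<longrightarrow> ent e < t)"

definition HoPeS ::
  "'a set set \<Rightarrow> ('a set \<Rightarrow> real) \<Rightarrow> 'a set set \<Rightarrow> ('a set \<Rightarrow> real option) \<Rightarrow> 'a set set" where
  "HoPeS S ent T dth = T \<union> {e. critical S ent T dth e}"

definition HoPeS_at ::
  "'a set set \<Rightarrow> ('a set \<Rightarrow> real) \<Rightarrow> 'a set set \<Rightarrow> ('a set \<Rightarrow> real option) \<Rightarrow> real \<Rightarrow> 'a set set" where
  "HoPeS_at S ent T dth \<alpha> =
     {e\<in>HoPeS S ent T dth. ent e \<le> \<alpha> \<and>
        \<not> (critical S ent T dth e \<and> (\<exists>t. dth e = Some t \<and> t \<le> \<alpha>))}"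

text \<open>A graph with vertex set C, given by its edge set G, spans the complex K on C if its
  edges lie in K and inclusion is a bijection on components (surjectivity is automatic
  since the vertex sets agree).\<close>
definition spans :: "'a set \<Rightarrow> 'a set set \<Rightarrow> 'a set set \<Rightarrow> bool" where
  "spans C G K \<longleftrightarrow> G \<subseteq> edges_of K \<and>
     (\<forall>u\<in>C. \<forall>v\<in>C. conn (edges_of K) u v \<longrightarrow> conn G u v)"

text \<open>Inclusion of the graph G into K induces an isomorphism H1(G;Z2) -> H1(K;Z2).
  G has no 2-simplices, so H1(G) = Z1(G).\<close>
definition H1_iso :: "'a set set \<Rightarrow> 'a set set \<Rightarrow> bool" where
  "H1_iso G K \<longleftrightarrow>
     (\<forall>z. z \<subseteq> G \<and> bd z = {} \<and> (\<exists>d. d \<subseteq> tris_of K \<and> bd d = z) \<longrightarrow> z = {}) \<and>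
     (\<forall>z. z \<subseteq> edges_of K \<and> bd z = {} \<longrightarrow>
        (\<exists>c. c \<subseteq> G \<and> bd c = {} \<and>
           (\<exists>d. d \<subseteq> tris_of K \<and> bd d = (z - c) \<union> (c - z))))"

end

theory Submission
  imports Defs
begin

abbreviation sd :: "'b set \<Rightarrow> 'b set \<Rightarrow> 'b set" where "sd X Y \<equiv> (X - Y) \<union> (Y - X)"

lemma card_sd_parity:
  assumes "finite A" "finite B"
  shows "odd (card (sd A B)) \<longleftrightarrow> (odd (card A) \<noteq> odd (card B))"
proof -
  have e: "sd A B = (A \<union> B) - (A \<inter> B)" by blast
  have c1: "card (A \<union> B) + card (A \<inter> B) = card A + card B"
    using card_Un_Int[OF assms] by simp
  have c2: "card (sd A B) = card (A \<union> B) - card (A \<inter> B)"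
    unfolding e using assms card_Diff_subset[of "A \<inter> B" "A \<union> B"] by auto
  have "card (A \<inter> B) \<le> card (A \<union> B)" using assms by (intro card_mono) auto
  with c1 c2 have "card (sd A B) + 2 * card (A \<inter> B) = card A + card B" by linarith
  then show ?thesis by (metis even_add even_mult_iff even_numeral)
qed

lemma bd_sd:
  assumes "finite X" "finite Y"
  shows "bd (sd X Y) = sd (bd X) (bd Y)"
proof -
  have "\<tau> \<in> bd (sd X Y) \<longleftrightarrow> \<tau> \<in> sd (bd X) (bd Y)" for \<tau>
  proof -
    have e: "{\<sigma>\<in>sd X Y. \<tau> \<in> faces1 \<sigma>} = sd {\<sigma>\<in>X. \<tau> \<in> faces1 \<sigma>} {\<sigma>\<in>Y. \<tau> \<in> faces1 \<sigma>}" by blast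
    have l: "\<tau> \<in> bd (sd X Y) \<longleftrightarrow> odd (card (sd {\<sigma>\<in>X. \<tau> \<in> faces1 \<sigma>} {\<sigma>\<in>Y. \<tau> \<in> faces1 \<sigma>}))"
      by (simp only: bd_def mem_Collect_eq e)
    have r: "\<tau> \<in> sd (bd X) (bd Y) \<longleftrightarrow> (odd (card {\<sigma>\<in>X. \<tau> \<in> faces1 \<sigma>}) \<noteq> odd (card {\<sigma>\<in>Y. \<tau> \<in> faces1 \<sigma>}))"
      unfolding bd_def by blast
    show ?thesis unfolding l r by (rule card_sd_parity) (use assms in auto)
  qed
  then show ?thesis by blast
qed

lemma bd_empty[simp]: "bd {} = {}" by (simp add: bd_def)

lemma bd_single: "bd {\<sigma>} = faces1 \<sigma>"
proof -
  have "{\<sigma>'\<in>{\<sigma>}. \<tau> \<in> faces1 \<sigma>'} = (if \<tau> \<in> faces1 \<sigma> then {\<sigma>} else {})" for \<tau> by auto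
  then show ?thesis unfolding bd_def by auto
qed

lemma faces1_edge: "u \<noteq> v \<Longrightarrow> faces1 {u, v} = {{u}, {v}}"
  unfolding faces1_def by auto

lemma faces1_tri: "a \<noteq> b \<Longrightarrow> a \<noteq> c \<Longrightarrow> b \<noteq> c \<Longrightarrow> faces1 {a, b, c} = {{b, c}, {a, c}, {a, b}}"
  unfolding faces1_def by auto

lemma bd_edge: "u \<noteq> v \<Longrightarrow> bd {{u, v}} = {{u}, {v}}"
  by (simp add: bd_single faces1_edge)

lemma bd_finite: "finite c \<Longrightarrow> (\<forall>\<sigma>\<in>c. finite \<sigma>) \<Longrightarrow> finite (bd c)"
proof -
  assume a: "finite c" "\<forall>\<sigma>\<in>c. finite \<sigma>"
  have "bd c \<subseteq> \<Union> (faces1 ` c)"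
  proof
    fix \<tau> assume "\<tau> \<in> bd c"
    then have "odd (card {\<sigma>\<in>c. \<tau> \<in> faces1 \<sigma>})" unfolding bd_def by simp
    then have "{\<sigma>\<in>c. \<tau> \<in> faces1 \<sigma>} \<noteq> {}" by (intro notI) simp
    then obtain \<sigma> where "\<sigma> \<in> c" "\<tau> \<in> faces1 \<sigma>" by blast
    then show "\<tau> \<in> \<Union> (faces1 ` c)" by blast
  qed
  moreover have "finite (\<Union> (faces1 ` c))" using a unfolding faces1_def by auto
  ultimately show ?thesis by (rule finite_subset)
qed

lemma insert_sd: "x \<notin> Y \<Longrightarrow> insert x Y = sd {x} Y" by blast

lemma bd_tri_bd: "card t = 3 \<Longrightarrow> bd (bd {t}) = {}"
proof -
  assume "card t = 3"
  then obtain a b c where t: "t = {a, b, c}" "a \<noteq> b" "b \<noteq> c" "a \<noteq> c" unfolding card_3_iff by blast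
  have n1: "{b, c} \<notin> {{a, c}, {a, b}}" using t by (simp add: doubleton_eq_iff)
  have n2: "{a, c} \<notin> {{a, b}}" using t by (simp add: doubleton_eq_iff)
  have e: "{{b, c}, {a, c}, {a, b}} = sd {{b, c}} (sd {{a, c}} {{a, b}})"
    using insert_sd[OF n1] insert_sd[OF n2] by simp
  have "bd {t} = {{b, c}, {a, c}, {a, b}}" using t by (simp add: bd_single faces1_tri)
  also have "\<dots> = sd {{b, c}} (sd {{a, c}} {{a, b}})" by (rule e)
  finally have "bd (bd {t}) = bd (sd {{b, c}} (sd {{a, c}} {{a, b}}))" by simp
  also have "\<dots> = sd (bd {{b, c}}) (bd (sd {{a, c}} {{a, b}}))" by (rule bd_sd) auto
  also have "\<dots> = sd (bd {{b, c}}) (sd (bd {{a, c}}) (bd {{a, b}}))" using bd_sd[of "{{a, c}}" "{{a, b}}"] by simp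
  also have "\<dots> = sd {{b}, {c}} (sd {{a}, {c}} {{a}, {b}})" using t bd_edge[of b c] bd_edge[of a c] bd_edge[of a b] by simp
  also have "\<dots> = sd {{b}, {c}} {{b}, {c}}"
  proof -
    have "sd {{a}, {c}} {{a}, {b}} = {{b}, {c}}" using t by auto
    then show ?thesis by simp
  qed
  also have "\<dots> = {}" by simp
  finally show ?thesis .
qed

lemma bd_bd:
  assumes "finite d" "\<forall>\<sigma>\<in>d. card \<sigma> = 3"
  shows "bd (bd d) = {}"
  using assms
proof (induction d rule: finite_induct)
  case empty then show ?case by simp
next
  case (insert t d)
  have fin: "\<forall>\<sigma>\<in>insert t d. finite \<sigma>" using insert.prems by (auto intro: card_ge_0_finite)
  have e: "insert t d = sd {t} d" using insert.hyps by auto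
  have "bd (insert t d) = bd (sd {t} d)" using e by simp
  also have "\<dots> = sd (bd {t}) (bd d)" by (rule bd_sd) (use insert.hyps in auto)
  finally have "bd (insert t d) = sd (bd {t}) (bd d)" .
  moreover have "finite (bd {t})" "finite (bd d)" using fin insert.hyps by (auto intro!: bd_finite)
  ultimately have "bd (bd (insert t d)) = sd (bd (bd {t})) (bd (bd d))" by (simp add: bd_sd)
  moreover have "card t = 3" using insert.prems by simp
  ultimately show ?case using insert.IH insert.prems bd_tri_bd[of t] by simp
qed

lemma fin_sing: "finite F \<Longrightarrow> finite {w. {w} \<in> F}"
  using finite_vimageI[of F "\<lambda>w. {w}"] by (simp add: vimage_def inj_on_def)

lemma card2_odd: "card X \<le> 2 \<Longrightarrow> odd (card X) \<longleftrightarrow> card X = 1"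
  by (cases "card X"; cases "card X - 1") auto

lemma filter_insert: "{x\<in>insert a A. P x} = (if P a then insert a {x\<in>A. P x} else {x\<in>A. P x})"
  by auto

lemma cut_parity:
  assumes "finite z" "\<forall>\<sigma>\<in>z. card \<sigma> = 2"
  shows "odd (card {\<sigma>\<in>z. card (\<sigma> \<inter> W) = 1}) \<longleftrightarrow> odd (card {w\<in>W. {w} \<in> bd z})"
  using assms
proof (induction z rule: finite_induct)
  case empty then show ?case by simp
next
  case (insert \<sigma> z)
  then obtain u v where uv: "\<sigma> = {u, v}" "u \<noteq> v" by (meson card_2_iff insertI1)
  have IH: "odd (card {\<sigma>\<in>z. card (\<sigma> \<inter> W) = 1}) \<longleftrightarrow> odd (card {w\<in>W. {w} \<in> bd z})"
    using insert by simp
  have fz: "finite (bd z)"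
    using insert.hyps insert.prems by (intro bd_finite) (auto intro: card_ge_0_finite)
  have "bd (insert \<sigma> z) = bd (sd {\<sigma>} z)" using insert.hyps insert_sd by metis
  also have "\<dots> = sd (bd {\<sigma>}) (bd z)" by (rule bd_sd) (use insert.hyps in auto)
  finally have b: "bd (insert \<sigma> z) = sd {{u}, {v}} (bd z)" using uv bd_edge[OF uv(2)] by simp
  have r: "{w\<in>W. {w} \<in> bd (insert \<sigma> z)} = sd ({u, v} \<inter> W) {w\<in>W. {w} \<in> bd z}"
  proof -
    have "{w} \<in> {{u}, {v}} \<longleftrightarrow> w \<in> {u, v}" for w by auto
    then show ?thesis unfolding b by blast
  qed
  have f1: "finite {w\<in>W. {w} \<in> bd z}" using fin_sing[OF fz] by (rule rev_finite_subset) auto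
  have pr: "odd (card {w\<in>W. {w} \<in> bd (insert \<sigma> z)}) \<longleftrightarrow>
     (odd (card ({u, v} \<inter> W)) \<noteq> odd (card {w\<in>W. {w} \<in> bd z}))"
    unfolding r by (rule card_sd_parity) (use f1 in auto)
  have "card ({u, v} \<inter> W) \<le> card {u, v}" by (intro card_mono) auto
  then have c2: "card ({u, v} \<inter> W) \<le> 2" using uv by simp
  have l: "{\<sigma>'\<in>insert \<sigma> z. card (\<sigma>' \<inter> W) = 1} =
      (if card (\<sigma> \<inter> W) = 1 then insert \<sigma> {\<sigma>\<in>z. card (\<sigma> \<inter> W) = 1} else {\<sigma>\<in>z. card (\<sigma> \<inter> W) = 1})"
    by (rule filter_insert)
  have fl: "finite {\<sigma>\<in>z. card (\<sigma> \<inter> W) = 1}" using insert.hyps by auto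
  have ns: "\<sigma> \<notin> {\<sigma>\<in>z. card (\<sigma> \<inter> W) = 1}" using insert.hyps by blast
  show ?case
  proof (cases "card (\<sigma> \<inter> W) = 1")
    case True
    then have "card {\<sigma>'\<in>insert \<sigma> z. card (\<sigma>' \<inter> W) = 1} = Suc (card {\<sigma>\<in>z. card (\<sigma> \<inter> W) = 1})"
      unfolding l using fl ns by simp
    moreover have "odd (card ({u, v} \<inter> W))" using True uv by simp
    ultimately show ?thesis using pr IH by simp
  next
    case False
    then have "card {\<sigma>'\<in>insert \<sigma> z. card (\<sigma>' \<inter> W) = 1} = card {\<sigma>\<in>z. card (\<sigma> \<inter> W) = 1}"
      unfolding l by simp
    moreover have "\<not> odd (card ({u, v} \<inter> W))" using False uv card2_odd[OF c2] by simp
    ultimately show ?thesis using pr IH by simp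
  qed
qed

lemma conn_sym: "conn E u v \<Longrightarrow> conn E v u"
proof -
  have s: "sym {(x, y). {x, y} \<in> E}" by (auto simp: sym_def insert_commute)
  assume "conn E u v"
  then show ?thesis unfolding conn_def using sym_rtrancl[OF s] by (auto simp: sym_def)
qed

lemma conn_trans: "conn E u v \<Longrightarrow> conn E v w \<Longrightarrow> conn E u w"
  unfolding conn_def by (rule rtrancl_trans)

lemma conn_refl: "conn E u u" unfolding conn_def by simp

lemma conn_edge: "{a, b} \<in> E \<Longrightarrow> conn E a b"
  unfolding conn_def by auto

lemma conn_mono: assumes "E1 \<subseteq> E2" "conn E1 u v" shows "conn E2 u v"
proof -
  have "{(x, y). {x, y} \<in> E1} \<subseteq> {(x, y). {x, y} \<in> E2}" using assms(1) by auto
  then show ?thesis using assms(2) unfolding conn_def using rtrancl_mono by blast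
qed

lemma conn_lift:
  assumes "\<forall>\<sigma>\<in>E1. \<forall>x y. \<sigma> = {x, y} \<longrightarrow> conn E2 x y" "conn E1 u v"
  shows "conn E2 u v"
proof -
  have "(u, v) \<in> {(x, y). {x, y} \<in> E1}\<^sup>*" using assms(2) unfolding conn_def .
  then show ?thesis
  proof (induction rule: rtrancl_induct)
    case base then show ?case by (rule conn_refl)
  next
    case (step y z)
    then have "{y, z} \<in> E1" by simp
    then have "conn E2 y z" by (rule assms(1)[rule_format, OF _ refl])
    then show ?case by (rule conn_trans[OF step.IH])
  qed
qed

lemma conn_closed_card:
  assumes "\<sigma> \<in> E" "card \<sigma> = 2" "W = {w. conn E x w}"
  shows "card (\<sigma> \<inter> W) \<noteq> 1"
proof -
  obtain a b where ab: "\<sigma> = {a, b}" "a \<noteq> b" using assms(2) by (meson card_2_iff)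
  have "a \<in> W \<longleftrightarrow> b \<in> W"
    using assms ab conn_trans conn_edge[of a b E] conn_edge[of b a E] by (auto simp: insert_commute)
  then show ?thesis using ab by (cases "a \<in> W") (auto simp: Int_insert_left)
qed

definition ends :: "'a \<Rightarrow> 'a \<Rightarrow> 'a set set" where
  "ends u v = (if u = v then {} else {{u}, {v}})"

lemma conn_chain:
  assumes "conn E u v" "\<forall>\<sigma>\<in>E. card \<sigma> = 2"
  shows "\<exists>p\<subseteq>E. finite p \<and> bd p = ends u v"
proof -
  have "(u, v) \<in> {(x, y). {x, y} \<in> E}\<^sup>*" using assms(1) unfolding conn_def .
  then show ?thesis
  proof (induction rule: rtrancl_induct)
    case base then show ?case by (intro exI[of _ "{}"]) (simp add: ends_def)
  next
    case (step x y)
    then obtain p where p: "p \<subseteq> E" "finite p" "bd p = ends u x" by blast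
    have xy: "{x, y} \<in> E" using step by simp
    then have "x \<noteq> y" using assms(2) by fastforce
    have "bd (sd p {{x, y}}) = sd (bd p) (bd {{x, y}})" by (rule bd_sd) (use p in auto)
    also have "\<dots> = ends u y" using \<open>x \<noteq> y\<close> p(3) by (auto simp: bd_edge ends_def)
    finally show ?case using p xy by (intro exI[of _ "sd p {{x, y}}"]) auto
  qed
qed

lemma chain_conn:
  assumes "p \<subseteq> E" "finite p" "\<forall>\<sigma>\<in>E. card \<sigma> = 2" "bd p = {{x}, {y}}" "x \<noteq> y"
  shows "conn E x y"
proof (rule ccontr)
  assume ny: "\<not> conn E x y"
  define W where "W = {w. conn E x w}"
  have A2: "{\<sigma>\<in>p. card (\<sigma> \<inter> W) = 1} = {}"
    using conn_closed_card[OF _ _ W_def] assms(1,3) by auto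
  moreover have B2: "{w\<in>W. {w} \<in> bd p} = {x}"
    using ny assms(4,5) conn_refl[of E x] unfolding W_def by auto
  moreover have "odd (card {\<sigma>\<in>p. card (\<sigma> \<inter> W) = 1}) \<longleftrightarrow> odd (card {w\<in>W. {w} \<in> bd p})"
    by (rule cut_parity) (use assms in auto)
  then show False unfolding A2 B2 by simp
qed

lemma tree_acyclic:
  assumes "spanning_tree C S T" "z \<subseteq> T" "finite z" "bd z = {}"
  shows "z = {}"
proof (rule ccontr)
  assume "z \<noteq> {}"
  then obtain e where e: "e \<in> z" by blast
  have T2: "\<forall>\<sigma>\<in>T. card \<sigma> = 2" using assms(1) unfolding spanning_tree_def edges_of_def by auto
  then obtain u v where uv: "e = {u, v}" "u \<noteq> v" using e assms(2) by (meson card_2_iff subsetD)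
  have nc: "\<not> conn (T - {e}) u v" using assms(1) e assms(2) uv unfolding spanning_tree_def by blast
  define W where "W = {w. conn (T - {e}) u w}"
  have A3: "{\<sigma>\<in>z. card (\<sigma> \<inter> W) = 1} = {e}"
  proof -
    have "e \<inter> W = {u}" using nc uv conn_refl[of _ u] unfolding W_def by auto
    moreover have "card (\<sigma> \<inter> W) \<noteq> 1" if "\<sigma> \<in> z" "\<sigma> \<noteq> e" for \<sigma>
      using conn_closed_card[OF _ _ W_def, of \<sigma>] that assms(2) T2 by auto
    ultimately show ?thesis using e by auto
  qed
  moreover have B3: "{w\<in>W. {w} \<in> bd z} = {}" using assms(4) by simp
  moreover have "odd (card {\<sigma>\<in>z. card (\<sigma> \<inter> W) = 1}) \<longleftrightarrow> odd (card {w\<in>W. {w} \<in> bd z})"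
    by (rule cut_parity) (use assms(2,3) T2 in auto)
  then show False unfolding A3 B3 by simp
qed

lemma sd_cancel: "sd A (sd A B) = B" by blast
lemma sd_self: "sd A A = {}" by blast

lemma bd_insert: "finite z \<Longrightarrow> e \<notin> z \<Longrightarrow> bd (insert e z) = sd (bd {e}) (bd z)"
proof -
  assume a: "finite z" "e \<notin> z"
  have "bd (insert e z) = bd (sd {e} z)" by (rule arg_cong[where f=bd]) (use a in blast)
  also have "\<dots> = sd (bd {e}) (bd z)" by (rule bd_sd) (use a in auto)
  finally show ?thesis .
qed

lemma bd_remove: "finite z \<Longrightarrow> e \<in> z \<Longrightarrow> bd (z - {e}) = sd (bd {e}) (bd z)"
proof -
  assume a: "finite z" "e \<in> z"
  have "z = insert e (z - {e})" using a by blast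
  then have "bd z = sd (bd {e}) (bd (z - {e}))" using bd_insert[of "z - {e}" e] a by simp
  then show ?thesis using sd_cancel by metis
qed

lemma st_conn: "spanning_tree C S T \<Longrightarrow> u \<in> C \<Longrightarrow> v \<in> C \<Longrightarrow> conn T u v"
  unfolding spanning_tree_def by (elim conjE) simp

lemma filt_finite:
  assumes "filtration C S ent" shows "finite S"
proof -
  have "S \<subseteq> Pow C" using assms unfolding filtration_def by auto
  moreover have "finite C" using assms unfolding filtration_def by auto
  ultimately show ?thesis by (simp add: finite_subset)
qed

lemma edges_card: "\<sigma> \<in> edges_of K \<Longrightarrow> card \<sigma> = 2" unfolding edges_of_def by simp

lemma acyclic_bridge:
  assumes "finite E" "\<forall>\<sigma>\<in>E. card \<sigma> = 2" "\<forall>z. z \<subseteq> E \<and> bd z = {} \<longrightarrow> z = {}"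
    "e \<in> E" "e = {u, v}"
  shows "\<not> conn (E - {e}) u v"
proof
  assume c: "conn (E - {e}) u v"
  have uv: "u \<noteq> v" using assms(2,4,5) by fastforce
  obtain p where p: "p \<subseteq> E - {e}" "finite p" "bd p = ends u v"
    using conn_chain[OF c] assms(2) by blast
  have "bd (insert e p) = sd (bd {e}) (bd p)" using p by (intro bd_insert) auto
  also have "\<dots> = {}" using p(3) uv assms(5) by (simp add: ends_def bd_edge sd_self)
  finally have "insert e p = {}" using assms(3) p assms(4) by blast
  then show False by simp
qed

lemma spanning_treeI:
  assumes "T' \<subseteq> edges_of S" "finite T'" "\<forall>u\<in>C. \<forall>v\<in>C. conn T' u v"
    "\<forall>z. z \<subseteq> T' \<and> bd z = {} \<longrightarrow> z = {}"
  shows "spanning_tree C S T'"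
proof -
  have c2: "\<forall>\<sigma>\<in>T'. card \<sigma> = 2" using assms(1) edges_card by blast
  show ?thesis unfolding spanning_tree_def
  proof (intro conjI ballI allI impI)
    show "T' \<subseteq> edges_of S" by (rule assms(1))
    show "conn T' u v" if "u \<in> C" "v \<in> C" for u v using assms(3) that by simp
    show "\<not> conn (T' - {e}) u v" if "e \<in> T'" "e = {u, v}" for e u v
      by (rule acyclic_bridge[OF assms(2) c2 assms(4) that])
  qed
qed

lemma tree_facts:
  assumes "filtration C S ent" "spanning_tree C S T"
  shows "T \<subseteq> edges_of S" "finite T" "\<forall>\<sigma>\<in>T. card \<sigma> = 2"
proof -
  show t: "T \<subseteq> edges_of S" using assms(2) unfolding spanning_tree_def by simp
  have "edges_of S \<subseteq> S" unfolding edges_of_def by auto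
  then show "finite T" using t by (intro finite_subset[OF _ filt_finite[OF assms(1)]]) auto
  show "\<forall>\<sigma>\<in>T. card \<sigma> = 2" using t edges_card by blast
qed

lemma mst_conn:
  assumes F: "filtration C S ent" and M: "is_MST C S ent T"
    and s: "\<sigma> \<in> edges_of S" "ent \<sigma> \<le> \<beta>" "\<sigma> = {a, b}"
  shows "conn (MST_at ent T \<beta>) a b"
proof (rule ccontr)
  assume nc: "\<not> conn (MST_at ent T \<beta>) a b"
  have ST: "spanning_tree C S T" using M unfolding is_MST_def by simp
  note tf = tree_facts[OF F ST]
  have ab: "a \<noteq> b" using s edges_card by fastforce
  have sC: "\<sigma> \<subseteq> C" using s F unfolding filtration_def edges_of_def by auto
  then have abC: "a \<in> C" "b \<in> C" using s by auto
  have cab: "conn T a b" using ST abC by (intro st_conn)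
  obtain p where p: "p \<subseteq> T" "finite p" "bd p = ends a b" using conn_chain[OF cab tf(3)] by meson
  have bp: "bd p = {{a}, {b}}" using p(3) ab by (simp add: ends_def)
  define W where "W = {w. conn (MST_at ent T \<beta>) a w}"
  have "{w\<in>W. {w} \<in> bd p} = {a}"
  proof -
    have "a \<in> W" unfolding W_def by (rule CollectI, rule conn_refl)
    moreover have "b \<notin> W" using nc unfolding W_def by simp
    ultimately show ?thesis unfolding bp by auto
  qed
  moreover have "odd (card {\<sigma>\<in>p. card (\<sigma> \<inter> W) = 1}) \<longleftrightarrow> odd (card {w\<in>W. {w} \<in> bd p})"
    by (rule cut_parity) (use p tf in auto)
  ultimately have "odd (card {\<sigma>\<in>p. card (\<sigma> \<inter> W) = 1})" by simp
  then have "{\<sigma>\<in>p. card (\<sigma> \<inter> W) = 1} \<noteq> {}" by (rule odd_card_imp_not_empty)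
  then obtain f where f: "f \<in> p" "card (f \<inter> W) = 1" by blast
  have fT: "f \<in> T" using f p by blast
  have "f \<notin> MST_at ent T \<beta>"
  proof
    assume "f \<in> MST_at ent T \<beta>"
    moreover have "card f = 2" using fT tf(3) by blast
    ultimately show False using conn_closed_card[OF _ _ W_def] f(2) by blast
  qed
  then have entf: "ent f > \<beta>" using fT unfolding MST_at_def by auto
  have sT: "\<sigma> \<notin> T"
  proof
    assume "\<sigma> \<in> T"
    then have "\<sigma> \<in> MST_at ent T \<beta>" using s unfolding MST_at_def by simp
    then show False using nc conn_edge s(3) by metis
  qed
  have fs: "f \<noteq> \<sigma>" using fT sT by blast
  define T' where "T' = insert \<sigma> (T - {f})"
  have T'e: "T' \<subseteq> edges_of S" using tf(1) s(1) unfolding T'_def by blast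
  have T'f: "finite T'" using tf(2) unfolding T'_def by simp
  have T'2: "\<forall>\<sigma>\<in>T'. card \<sigma> = 2" using T'e edges_card by blast
  have sp: "\<sigma> \<notin> p" using sT p by blast
  have cT': "conn T' x y" if "\<tau> \<in> T" "\<tau> = {x, y}" for \<tau> x y
  proof (cases "\<tau> = f")
    case False
    then have "\<tau> \<in> T'" using that unfolding T'_def by blast
    then show ?thesis using conn_edge that(2) by metis
  next
    case True
    have xy: "x \<noteq> y" using that tf(3) by fastforce
    define q where "q = insert \<sigma> (p - {f})"
    have qT: "q \<subseteq> T'" using p unfolding q_def T'_def by blast
    have "bd q = sd (bd {\<sigma>}) (bd (p - {f}))" unfolding q_def using p sp by (intro bd_insert) auto
    also have "\<dots> = sd (bd {\<sigma>}) (sd (bd {f}) (bd p))" using bd_remove[OF p(2) f(1)] by simp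
    also have "bd {\<sigma>} = bd p" using bp s(3) ab by (simp add: bd_edge)
    also have "sd (bd p) (sd (bd {f}) (bd p)) = bd {f}" by blast
    also have "\<dots> = {{x}, {y}}"
    proof -
      have "f = {x, y}" using True that(2) by simp
      then show ?thesis using bd_edge[OF xy] by simp
    qed
    finally have bq: "bd q = {{x}, {y}}" .
    show ?thesis
      by (rule chain_conn[OF qT _ _ bq xy]) (use p T'2 in \<open>auto simp: q_def\<close>)
  qed
  have conT': "\<forall>u\<in>C. \<forall>v\<in>C. conn T' u v"
  proof (intro ballI)
    fix u v assume "u \<in> C" "v \<in> C"
    then have "conn T u v" using ST by (intro st_conn)
    then show "conn T' u v" by (rule conn_lift[rotated]) (use cT' in blast)
  qed
  have acT': "\<forall>z. z \<subseteq> T' \<and> bd z = {} \<longrightarrow> z = {}"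
  proof (intro allI impI)
    fix z assume z: "z \<subseteq> T' \<and> bd z = {}"
    have zf: "finite z" using z T'f finite_subset by blast
    show "z = {}"
    proof (cases "\<sigma> \<in> z")
      case False
      then have "z \<subseteq> T" using z unfolding T'_def by blast
      then show ?thesis using tree_acyclic[OF ST] zf z by blast
    next
      case True
      define z' where "z' = sd z (insert \<sigma> p)"
      have z'T: "z' \<subseteq> T" using z p True unfolding z'_def T'_def by blast
      have "bd z' = sd (bd z) (bd (insert \<sigma> p))" unfolding z'_def by (rule bd_sd) (use zf p in auto)
      also have "bd (insert \<sigma> p) = sd (bd {\<sigma>}) (bd p)" using p sp by (intro bd_insert) auto
      also have "bd {\<sigma>} = bd p" using bp s(3) ab by (simp add: bd_edge)
      finally have "bd z' = {}" using z by (simp add: sd_self)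
      moreover have "f \<in> z'"
      proof -
        have "f \<notin> T'" using fs unfolding T'_def by blast
        then have "f \<notin> z" using z by blast
        then show ?thesis using f(1) unfolding z'_def by blast
      qed
      moreover have "finite z'" unfolding z'_def using zf p by auto
      ultimately show ?thesis using tree_acyclic[OF ST z'T] by blast
    qed
  qed
  have "spanning_tree C S T'" by (rule spanning_treeI[OF T'e T'f conT' acT'])
  then have "total_len ent T \<le> total_len ent T'" using M unfolding is_MST_def by blast
  moreover have "total_len ent T' = total_len ent T - 2 * ent f + 2 * ent \<sigma>"
  proof -
    have "total_len ent T' = 2 * ent \<sigma> + (\<Sum>e\<in>T - {f}. 2 * ent e)"
      unfolding T'_def total_len_def using tf(2) sT by (simp add: sum.insert)
    also have "(\<Sum>e\<in>T - {f}. 2 * ent e) = total_len ent T - 2 * ent f"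
      unfolding total_len_def using tf(2) fT by (simp add: sum_diff1)
    finally show ?thesis by simp
  qed
  ultimately show False using entf s(2) by simp
qed

definition Bdr :: "'a set set \<Rightarrow> 'a set set set" where
  "Bdr K = {bd d |d. d \<subseteq> tris_of K}"

definition spn :: "'a set set \<Rightarrow> 'a set set \<Rightarrow> 'a set set set" where
  "spn K X = {sd Y b |Y b. Y \<subseteq> X \<and> b \<in> Bdr K}"

definition indep :: "'a set set \<Rightarrow> 'a set set \<Rightarrow> bool" where
  "indep K X \<longleftrightarrow> (\<forall>Y\<subseteq>X. Y \<in> Bdr K \<longrightarrow> Y = {})"

lemma Bdr_empty: "{} \<in> Bdr K"
  unfolding Bdr_def by (intro CollectI exI[of _ "{}"]) simp

lemma Bdr_sd:
  assumes "finite K" "b1 \<in> Bdr K" "b2 \<in> Bdr K"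
  shows "sd b1 b2 \<in> Bdr K"
proof -
  obtain d1 d2 where d: "b1 = bd d1" "d1 \<subseteq> tris_of K" "b2 = bd d2" "d2 \<subseteq> tris_of K"
    using assms(2,3) unfolding Bdr_def by blast
  have ft: "finite (tris_of K)" using assms(1) unfolding tris_of_def by simp
  have "sd b1 b2 = bd (sd d1 d2)" using d ft by (simp add: bd_sd finite_subset)
  moreover have "sd d1 d2 \<subseteq> tris_of K" using d by blast
  ultimately show ?thesis unfolding Bdr_def by blast
qed

lemma spn_sd:
  assumes "finite K" "A \<in> spn K X" "B \<in> spn K X"
  shows "sd A B \<in> spn K X"
proof -
  obtain Y1 b1 Y2 b2 where y: "A = sd Y1 b1" "Y1 \<subseteq> X" "b1 \<in> Bdr K" "B = sd Y2 b2" "Y2 \<subseteq> X" "b2 \<in> Bdr K"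
    using assms(2,3) unfolding spn_def by blast
  have "sd A B = sd (sd Y1 Y2) (sd b1 b2)" using y(1,4) by blast
  moreover have "sd Y1 Y2 \<subseteq> X" using y by blast
  moreover have "sd b1 b2 \<in> Bdr K" using Bdr_sd assms(1) y by blast
  ultimately show ?thesis unfolding spn_def by blast
qed

lemma spn_sub: "Y \<subseteq> X \<Longrightarrow> Y \<in> spn K X"
  unfolding spn_def using Bdr_empty by (intro CollectI exI[of _ Y] exI[of _ "{}"]) simp

lemma spn_Bdr: "b \<in> Bdr K \<Longrightarrow> b \<in> spn K X"
  unfolding spn_def by (intro CollectI exI[of _ "{}"] exI[of _ b]) simp

lemma spn_mono: "X \<subseteq> X' \<Longrightarrow> A \<in> spn K X \<Longrightarrow> A \<in> spn K X'"
  unfolding spn_def by blast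

lemma spn_sum:
  assumes "finite K" "finite Y" "\<forall>y\<in>Y. {y} \<in> spn K X"
  shows "Y \<in> spn K X"
  using assms(2,3)
proof (induction Y rule: finite_induct)
  case empty show ?case using spn_sub[of "{}" X] by simp
next
  case (insert y Y)
  have e: "insert y Y = sd {y} Y" using insert.hyps by blast
  show ?case unfolding e by (rule spn_sd[OF assms(1)]) (use insert in auto)
qed

lemma sd_sd_cancel: "sd (sd Z b1) (sd Z b2) = sd b1 b2" by blast

lemma spn_iff: "A \<in> spn K X \<longleftrightarrow> (\<exists>Z. Z \<subseteq> X \<and> sd A Z \<in> Bdr K)"
proof
  assume "A \<in> spn K X"
  then obtain Y b where yb: "A = sd Y b" "Y \<subseteq> X" "b \<in> Bdr K" unfolding spn_def by blast
  have "sd A Y = b" unfolding yb(1) by blast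
  then show "\<exists>Z. Z \<subseteq> X \<and> sd A Z \<in> Bdr K" using yb by blast
next
  assume "\<exists>Z. Z \<subseteq> X \<and> sd A Z \<in> Bdr K"
  then obtain Z where z: "Z \<subseteq> X" "sd A Z \<in> Bdr K" by blast
  have "A = sd Z (sd A Z)" by blast
  then show "A \<in> spn K X" unfolding spn_def using z by blast
qed

lemma dim_le:
  assumes K: "finite K" and fX: "finite X" and fY: "finite Y" and iY: "indep K Y"
    and sp: "\<forall>y\<in>Y. {y} \<in> spn K X"
  shows "card Y \<le> card X"
proof -
  have all: "\<forall>Y'\<in>Pow Y. \<exists>Z. Z \<subseteq> X \<and> sd Y' Z \<in> Bdr K"
  proof
    fix Y' assume "Y' \<in> Pow Y"
    then have "finite Y'" using fY finite_subset by blast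
    then have "Y' \<in> spn K X" using spn_sum[OF K, of Y' X] sp \<open>Y' \<in> Pow Y\<close> by blast
    then show "\<exists>Z. Z \<subseteq> X \<and> sd Y' Z \<in> Bdr K" unfolding spn_iff .
  qed
  obtain g where g: "\<forall>Y'\<in>Pow Y. g Y' \<subseteq> X \<and> sd Y' (g Y') \<in> Bdr K"
    using bchoice[OF all] by blast
  have inj: "inj_on g (Pow Y)"
  proof (rule inj_onI)
    fix Y1 Y2 assume a: "Y1 \<in> Pow Y" "Y2 \<in> Pow Y" "g Y1 = g Y2"
    have b1: "sd Y1 (g Y1) \<in> Bdr K" using g a(1) by blast
    have b2: "sd Y2 (g Y1) \<in> Bdr K" using g a(2) a(3) by metis
    have "sd Y1 Y2 = sd (sd Y1 (g Y1)) (sd Y2 (g Y1))" by blast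
    then have "sd Y1 Y2 \<in> Bdr K" using Bdr_sd[OF K b1 b2] by simp
    moreover have "sd Y1 Y2 \<subseteq> Y" using a by blast
    ultimately have "sd Y1 Y2 = {}" using indep_def[THEN iffD1, OF iY, rule_format] by presburger
    then show "Y1 = Y2" by blast
  qed
  have "g ` Pow Y \<subseteq> Pow X" using g by blast
  then have "card (Pow Y) \<le> card (Pow X)" using card_inj_on_le[OF inj] fX by simp
  then have "(2::nat) ^ card Y \<le> 2 ^ card X" using fX fY by (simp add: card_Pow)
  then show ?thesis by simp
qed

lemma exmax:
  fixes w :: "'b \<Rightarrow> real"
  assumes "finite B" "B \<noteq> {}" shows "\<exists>b\<in>B. \<forall>x\<in>B. w x \<le> w b"
proof -
  have "Max (w ` B) \<in> w ` B" using assms by (intro Max_in) auto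
  then obtain b where b: "b \<in> B" "w b = Max (w ` B)" by auto
  have "\<forall>x\<in>B. w x \<le> Max (w ` B)" using assms(1) by (intro ballI Max_ge) auto
  then show ?thesis using b by (intro bexI[of _ b]) auto
qed

lemma weight_le:
  fixes w :: "'b \<Rightarrow> real"
  assumes "finite B" "finite G" "\<forall>x\<in>B \<union> G. w x \<ge> 0"
    "\<forall>s. card {x\<in>B. w x \<ge> s} \<le> card {x\<in>G. w x \<ge> s}"
  shows "sum w B \<le> sum w G"
  using assms
proof (induction "card B" arbitrary: B G)
  case 0
  then have "B = {}" by simp
  then show ?case using 0 by (simp add: sum_nonneg)
next
  case (Suc n)
  then have "B \<noteq> {}" by auto
  obtain b where b: "b \<in> B" "\<forall>x\<in>B. w x \<le> w b"
    using exmax[OF Suc.prems(1) \<open>B \<noteq> {}\<close>] by blast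
  have "card {x\<in>B. w x \<ge> w b} \<ge> 1"
  proof -
    have "b \<in> {x\<in>B. w x \<ge> w b}" using b by simp
    moreover have "finite {x\<in>B. w x \<ge> w b}" using Suc.prems(1) by simp
    ultimately have "card {x\<in>B. w x \<ge> w b} > 0" by (auto simp: card_gt_0_iff)
    then show ?thesis by simp
  qed
  then have "card {x\<in>G. w x \<ge> w b} \<ge> 1" using Suc.prems(4) le_trans by blast
  then have "G \<noteq> {}" by auto
  obtain g where g: "g \<in> G" "\<forall>x\<in>G. w x \<le> w g"
    using exmax[OF Suc.prems(2) \<open>G \<noteq> {}\<close>] by blast
  have gb: "w g \<ge> w b"
  proof -
    have "{x\<in>G. w x \<ge> w b} \<noteq> {}" using \<open>card {x\<in>G. w x \<ge> w b} \<ge> 1\<close> by (intro notI) simp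
    then obtain x where "x \<in> G" "w x \<ge> w b" by blast
    then show ?thesis using g by force
  qed
  have IH: "sum w (B - {b}) \<le> sum w (G - {g})"
  proof (rule Suc.hyps(1))
    show "n = card (B - {b})" using Suc.hyps(2) b(1) Suc.prems(1) by simp
    show "finite (B - {b})" "finite (G - {g})" using Suc.prems by auto
    show "\<forall>x\<in>(B - {b}) \<union> (G - {g}). w x \<ge> 0" using Suc.prems(3) by blast
    show "\<forall>s. card {x\<in>B - {b}. w x \<ge> s} \<le> card {x\<in>G - {g}. w x \<ge> s}"
    proof
      fix s
      show "card {x\<in>B - {b}. w x \<ge> s} \<le> card {x\<in>G - {g}. w x \<ge> s}"
      proof (cases "s \<le> w b")
        case True
        have e1: "{x\<in>B - {b}. w x \<ge> s} = {x\<in>B. w x \<ge> s} - {b}" by blast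
        have e2: "{x\<in>G - {g}. w x \<ge> s} = {x\<in>G. w x \<ge> s} - {g}" by blast
        have c1: "card {x\<in>B - {b}. w x \<ge> s} = card {x\<in>B. w x \<ge> s} - 1"
          unfolding e1 using b(1) True Suc.prems(1) by (simp add: card_Diff_singleton)
        have c2: "card {x\<in>G - {g}. w x \<ge> s} = card {x\<in>G. w x \<ge> s} - 1"
          unfolding e2 using g(1) True gb Suc.prems(2) by (simp add: card_Diff_singleton)
        show ?thesis unfolding c1 c2 using Suc.prems(4) diff_le_mono by blast
      next
        case False
        then have e0: "{x\<in>B - {b}. w x \<ge> s} = {}" using b(2) by force
        show ?thesis unfolding e0 by simp
      qed
    qed
  qed
  have "sum w B = w b + sum w (B - {b})" using b(1) Suc.prems(1) by (simp add: sum.remove)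
  moreover have "sum w G = w g + sum w (G - {g})" using g(1) Suc.prems(2) by (simp add: sum.remove)
  ultimately show ?case using IH gb by simp
qed

lemma sd_recover: "e \<in> A \<Longrightarrow> m = sd A b \<Longrightarrow> {e} = sd (A - {e}) (sd m b)" by blast
lemma sd_recover2: "bd0 = sd (sd p {e}) c \<Longrightarrow> {e} = sd (sd p c) bd0" by blast

locale hs =
  fixes C :: "'a set" and S :: "'a set set" and ent :: "'a set \<Rightarrow> real"
    and T :: "'a set set" and dth :: "'a set \<Rightarrow> real option"
  assumes F: "filtration C S ent" and M: "is_MST C S ent T" and V: "valid_deaths S ent T dth"
begin

abbreviation "Q \<equiv> Qf S ent"
abbreviation "D t \<equiv> {e\<in>cand S T. dth e = Some t}"
abbreviation "Bh \<equiv> HoPeS_at S ent T dth"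
definition "Bleq \<alpha> s = {b\<in>Bh \<alpha>. ent b \<le> s}"

lemma finS: "finite S" using filt_finite[OF F] .
lemma ST: "spanning_tree C S T" using M unfolding is_MST_def by simp
lemmas tf = tree_facts[OF F ST]

lemma cand_sub: "cand S T \<subseteq> edges_of S" unfolding cand_def by blast
lemma cand_T: "e \<in> cand S T \<Longrightarrow> e \<notin> T" unfolding cand_def by blast
lemma edges_S_fin: "finite (edges_of S)" using finS unfolding edges_of_def by simp
lemma cand_fin: "finite (cand S T)" using edges_S_fin cand_sub finite_subset by blast
lemma ent_pos: "\<sigma> \<in> edges_of S \<Longrightarrow> ent \<sigma> > 0"
  using F unfolding filtration_def edges_of_def by auto
lemma finQ: "finite (Q \<alpha>)" using finS unfolding Qf_def by simp
lemma edges_Q: "edges_of (Q \<alpha>) = {\<sigma>\<in>edges_of S. ent \<sigma> \<le> \<alpha>}"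
  unfolding edges_of_def Qf_def by auto
lemma finEQ: "finite (edges_of (Q \<alpha>))" using edges_S_fin unfolding edges_Q by simp
lemma tris_mono: "t \<le> \<alpha> \<Longrightarrow> tris_of (Q t) \<subseteq> tris_of (Q \<alpha>)"
  unfolding tris_of_def Qf_def by auto
lemma tris_card: "\<sigma> \<in> tris_of K \<Longrightarrow> card \<sigma> = 3" unfolding tris_of_def by simp
lemma tris_fin: "finite (tris_of (Q \<alpha>))" using finQ unfolding tris_of_def by simp
lemma MST_sub: "MST_at ent T \<beta> \<subseteq> T" unfolding MST_at_def by blast
lemma MST_fin: "finite (MST_at ent T \<beta>)" using tf(2) MST_sub finite_subset by blast
lemma MST_c2: "\<forall>\<sigma>\<in>MST_at ent T \<beta>. card \<sigma> = 2" using tf(3) MST_sub by blast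

lemma bd_bd_tris: "d \<subseteq> tris_of (Q \<alpha>) \<Longrightarrow> bd (bd d) = {}"
  using tris_fin finite_subset tris_card by (intro bd_bd) blast+

lemma bd_tris_fin: "d \<subseteq> tris_of (Q \<alpha>) \<Longrightarrow> finite (bd d)"
proof -
  assume a: "d \<subseteq> tris_of (Q \<alpha>)"
  have "finite d" using a tris_fin finite_subset by blast
  moreover have "\<forall>\<sigma>\<in>d. finite \<sigma>" using a tris_card by (metis card.infinite subsetD zero_neq_numeral)
  ultimately show ?thesis by (rule bd_finite)
qed

lemma Dfacts:
  "D t \<subseteq> unassigned S ent T dth t" "leading S ent T dth t (D t)"
  "\<And>L. leading S ent T dth t L \<Longrightarrow> (\<Sum>e\<in>L. ent e) \<le> (\<Sum>e\<in>D t. ent e)"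
  using V unfolding valid_deaths_def Let_def by blast+

lemma unassigned_sub: "unassigned S ent T dth t \<subseteq> cand S T"
  unfolding unassigned_def by blast
lemma unassigned_fin: "finite (unassigned S ent T dth t)"
  using cand_fin unassigned_sub finite_subset by blast

lemma kerf_sub: "A \<in> kerf S ent T dth t \<Longrightarrow> A \<subseteq> unassigned S ent T dth t"
  unfolding kerf_def by blast

lemma kerf_empty: "{} \<in> kerf S ent T dth t"
  unfolding kerf_def by (intro CollectI conjI exI[of _ "{}"]) auto

lemma kerf_sd:
  assumes "A1 \<in> kerf S ent T dth t" "A2 \<in> kerf S ent T dth t"
  shows "sd A1 A2 \<in> kerf S ent T dth t"
proof -
  obtain d1 where d1: "d1 \<subseteq> tris_of (Q t)" "sd A1 (bd d1) \<subseteq> MST_at ent T t"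
    using assms(1) unfolding kerf_def by blast
  obtain d2 where d2: "d2 \<subseteq> tris_of (Q t)" "sd A2 (bd d2) \<subseteq> MST_at ent T t"
    using assms(2) unfolding kerf_def by blast
  have fd: "finite d1" "finite d2" using d1 d2 tris_fin finite_subset by blast+
  have "bd (sd d1 d2) = sd (bd d1) (bd d2)" using fd by (rule bd_sd)
  then have "sd (sd A1 A2) (bd (sd d1 d2)) = sd (sd A1 (bd d1)) (sd A2 (bd d2))" by blast
  then have "sd (sd A1 A2) (bd (sd d1 d2)) \<subseteq> MST_at ent T t" using d1 d2 by blast
  moreover have "sd d1 d2 \<subseteq> tris_of (Q t)" using d1 d2 by blast
  moreover have "sd A1 A2 \<subseteq> unassigned S ent T dth t" using assms kerf_sub by blast
  ultimately show ?thesis unfolding kerf_def by blast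
qed

lemma kerf_fin: "finite (kerf S ent T dth t)"
proof -
  have "kerf S ent T dth t \<subseteq> Pow (unassigned S ent T dth t)" using kerf_sub by blast
  then show ?thesis using unassigned_fin finite_subset by blast
qed

lemma exchange:
  assumes eD: "e \<in> D t" and A: "A \<in> kerf S ent T dth t" and AD: "A \<inter> D t = {e}" and fA: "f \<in> A"
  shows "ent f \<le> ent e"
proof (rule ccontr)
  assume lt: "\<not> ent f \<le> ent e"
  let ?K = "kerf S ent T dth t"
  have lead: "leading S ent T dth t (D t)" by (rule Dfacts(2))
  have bij: "bij_betw (\<lambda>A. A \<inter> D t) ?K (Pow (D t))" using lead unfolding leading_def by blast
  have fD: "f \<notin> D t" using fA AD lt by auto
  define L where "L = insert f (D t - {e})"
  have Lsub: "L \<subseteq> unassigned S ent T dth t"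
    using Dfacts(1) kerf_sub[OF A] fA unfolding L_def by blast
  have finD: "finite (D t)" using cand_fin by simp
  have injL: "inj_on (\<lambda>A. A \<inter> L) ?K"
  proof (rule inj_onI)
    fix X Y assume xy: "X \<in> ?K" "Y \<in> ?K" "X \<inter> L = Y \<inter> L"
    define Z where "Z = sd X Y"
    have ZK: "Z \<in> ?K" unfolding Z_def using kerf_sd xy by blast
    have ZL: "Z \<inter> L = {}" using xy(3) unfolding Z_def by blast
    have "Z = {}"
    proof (cases "e \<in> Z")
      case False
      then have "Z \<inter> D t = {} \<inter> D t" using ZL unfolding L_def by blast
      then show ?thesis using inj_onD[OF bij_betw_imp_inj_on[OF bij] _ ZK kerf_empty] by simp
    next
      case True
      then have "Z \<inter> D t = {e}" using ZL eD unfolding L_def by blast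
      then have "Z \<inter> D t = A \<inter> D t" using AD by simp
      then have "Z = A" using inj_onD[OF bij_betw_imp_inj_on[OF bij] _ ZK A] by simp
      then have "f \<in> Z \<inter> L" using fA unfolding L_def by simp
      then show ?thesis using ZL by simp
    qed
    then show "X = Y" unfolding Z_def by blast
  qed
  have "card ?K = card (Pow (D t))" using bij by (rule bij_betw_same_card)
  also have "\<dots> = card (Pow L)"
  proof -
    have c1: "card (D t - {e}) = card (D t) - 1" using eD by (simp add: card_Diff_singleton)
    have c0: "card (D t) > 0" using finD eD card_gt_0_iff by blast
    have "f \<notin> D t - {e}" using fD by blast
    then have "card L = Suc (card (D t - {e}))" unfolding L_def using finD by simp
    then have "card L = card (D t)" using c1 c0 by simp
    moreover have "finite L" unfolding L_def using finD by simp
    ultimately show ?thesis using finD by (simp add: card_Pow)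
  qed
  finally have cK: "card ?K = card (Pow L)" .
  have img: "(\<lambda>A. A \<inter> L) ` ?K \<subseteq> Pow L" by blast
  have finPL: "finite (Pow L)" unfolding L_def using finD by simp
  have "card ((\<lambda>A. A \<inter> L) ` ?K) = card (Pow L)" using card_image[OF injL] cK by simp
  then have "(\<lambda>A. A \<inter> L) ` ?K = Pow L" using card_subset_eq[OF finPL img] by simp
  then have "bij_betw (\<lambda>A. A \<inter> L) ?K (Pow L)" using injL unfolding bij_betw_def by simp
  then have "leading S ent T dth t L" unfolding leading_def using Lsub by simp
  then have le: "(\<Sum>x\<in>L. ent x) \<le> (\<Sum>x\<in>D t. ent x)" by (rule Dfacts(3))
  have "(\<Sum>x\<in>L. ent x) = ent f + (\<Sum>x\<in>D t - {e}. ent x)"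
    unfolding L_def using finD fD by (subst sum.insert) auto
  also have "(\<Sum>x\<in>D t - {e}. ent x) = (\<Sum>x\<in>D t. ent x) - ent e"
    using finD eD by (simp add: sum_diff1)
  finally have "(\<Sum>x\<in>L. ent x) = ent f + ((\<Sum>x\<in>D t. ent x) - ent e)" .
  then show False using le lt by simp
qed

lemma Bmem: "e \<in> Bh \<alpha> \<longleftrightarrow> (e \<in> T \<and> ent e \<le> \<alpha>) \<or>
   (e \<in> cand S T \<and> ent e \<le> \<alpha> \<and> (\<forall>t. dth e = Some t \<longrightarrow> \<alpha> < t))"
proof (cases "e \<in> T")
  case True
  then have "e \<notin> cand S T" using cand_T by blast
  then show ?thesis using True unfolding HoPeS_at_def HoPeS_def critical_def by auto
next
  case False
  show ?thesis
  proof
    assume "e \<in> Bh \<alpha>"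
    then show "(e \<in> T \<and> ent e \<le> \<alpha>) \<or> (e \<in> cand S T \<and> ent e \<le> \<alpha> \<and> (\<forall>t. dth e = Some t \<longrightarrow> \<alpha> < t))"
      using False unfolding HoPeS_at_def HoPeS_def critical_def by force
  next
    assume "(e \<in> T \<and> ent e \<le> \<alpha>) \<or> (e \<in> cand S T \<and> ent e \<le> \<alpha> \<and> (\<forall>t. dth e = Some t \<longrightarrow> \<alpha> < t))"
    then have h: "e \<in> cand S T" "ent e \<le> \<alpha>" "\<forall>t. dth e = Some t \<longrightarrow> \<alpha> < t" using False by auto
    then have "critical S ent T dth e" unfolding critical_def by force
    then show "e \<in> Bh \<alpha>" using h unfolding HoPeS_at_def HoPeS_def by force
  qed
qed

lemma B_sub: "Bh \<alpha> \<subseteq> edges_of (Q \<alpha>)"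
  using Bmem tf(1) cand_sub unfolding edges_Q by blast

lemma path_sum:
  assumes "finite A'" "A' \<subseteq> edges_of S" "\<forall>f\<in>A'. ent f \<le> \<beta>"
  shows "\<exists>P. P \<subseteq> MST_at ent T \<beta> \<and> finite P \<and> bd P = bd A'"
  using assms
proof (induction A' rule: finite_induct)
  case empty then show ?case by (intro exI[of _ "{}"]) simp
next
  case (insert f A')
  then obtain P where P: "P \<subseteq> MST_at ent T \<beta>" "finite P" "bd P = bd A'" by auto
  have fS: "f \<in> edges_of S" "ent f \<le> \<beta>" using insert.prems by auto
  obtain x y where xy: "f = {x, y}" "x \<noteq> y" using edges_card[OF fS(1)] by (meson card_2_iff)
  have "conn (MST_at ent T \<beta>) x y" using mst_conn[OF F M fS xy(1)] .
  then obtain p where p: "p \<subseteq> MST_at ent T \<beta>" "finite p" "bd p = ends x y"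
    using conn_chain[OF _ MST_c2] by meson
  have bp: "bd p = bd {f}" using p(3) xy by (simp add: ends_def bd_edge)
  have "bd (sd P p) = sd (bd P) (bd p)" using P p by (intro bd_sd) auto
  also have "\<dots> = sd (bd {f}) (bd A')" using P(3) bp by blast
  also have "\<dots> = bd (insert f A')" using bd_insert[OF insert.hyps] by simp
  finally show ?case using P p by (intro exI[of _ "sd P p"]) auto
qed

lemma tree_unique:
  assumes "m \<subseteq> T" "P \<subseteq> T" "bd m = bd P"
  shows "m = P"
proof -
  have fm: "finite m" "finite P" using assms tf(2) finite_subset by blast+
  have "bd (sd m P) = sd (bd m) (bd P)" using fm by (rule bd_sd)
  also have "\<dots> = {}" using assms(3) by simp
  finally have b0: "bd (sd m P) = {}" .
  have "sd m P \<subseteq> T" using assms(1,2) by blast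
  moreover have "finite (sd m P)" using fm by simp
  ultimately have "sd m P = {}" using tree_acyclic[OF ST _ _ b0] by simp
  then show ?thesis by blast
qed

definition Nd :: "real \<Rightarrow> real \<Rightarrow> nat" where
  "Nd \<alpha> t = card {f\<in>cand S T. \<exists>t'. dth f = Some t' \<and> t < t' \<and> t' \<le> \<alpha>}"

lemma expand_dead:
  "\<forall>e t. e \<in> cand S T \<and> dth e = Some t \<and> t \<le> \<alpha> \<and> Nd \<alpha> t = n \<longrightarrow>
      {e} \<in> spn (Q \<alpha>) (Bleq \<alpha> (ent e))"
proof (induction n rule: less_induct)
  case (less n)
  show ?case
  proof (intro allI impI, elim conjE)
    fix e t assume ec: "e \<in> cand S T" and dt: "dth e = Some t" and ta: "t \<le> \<alpha>" and Nn: "Nd \<alpha> t = n"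
    let ?K = "kerf S ent T dth t"
    have eD: "e \<in> D t" using ec dt by simp
    have bij: "bij_betw (\<lambda>A. A \<inter> D t) ?K (Pow (D t))" using Dfacts(2) unfolding leading_def by blast
    have "{e} \<in> Pow (D t)" using eD by simp
    then have "{e} \<in> (\<lambda>A. A \<inter> D t) ` ?K" using bij unfolding bij_betw_def by simp
    then obtain A where A0: "A \<in> ?K" "{e} = A \<inter> D t" by (rule imageE)
    then have A: "A \<in> ?K" "A \<inter> D t = {e}" by simp_all
    have "e \<in> A \<inter> D t" using A(2) by simp
    then have eA: "e \<in> A" by simp
    have Aun: "A \<subseteq> unassigned S ent T dth t" using kerf_sub[OF A(1)] .
    obtain d where d: "d \<subseteq> tris_of (Q t)" "sd A (bd d) \<subseteq> MST_at ent T t"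
      using A(1) unfolding kerf_def by blast
    define m where "m = sd A (bd d)"
    have fA: "finite A" using Aun unassigned_fin finite_subset by blast
    have AS: "A \<subseteq> edges_of S" using Aun unassigned_sub cand_sub by blast
    have entA: "\<forall>f\<in>A. ent f \<le> ent e" using exchange[OF eD A(1) A(2)] by blast
    obtain P where P: "P \<subseteq> MST_at ent T (ent e)" "finite P" "bd P = bd A"
      using path_sum[OF fA AS entA] by blast
    have dta: "d \<subseteq> tris_of (Q \<alpha>)" using d(1) tris_mono[OF ta] by blast
    have "bd m = sd (bd A) (bd (bd d))" unfolding m_def using fA bd_tris_fin[OF d(1)] by (rule bd_sd)
    also have "\<dots> = bd A" using bd_bd_tris[OF d(1)] by simp
    finally have "bd m = bd P" using P(3) by simp
    moreover have "m \<subseteq> T" using d(2) MST_sub unfolding m_def by blast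
    moreover have "P \<subseteq> T" using P(1) MST_sub by blast
    ultimately have mP: "m = P" using tree_unique by blast
    have ete: "ent e \<le> \<alpha>" using Aun eA ta unfolding unassigned_def by auto
    have msub: "m \<subseteq> Bleq \<alpha> (ent e)"
    proof
      fix g assume "g \<in> m"
      then have "g \<in> T" "ent g \<le> ent e" using mP P(1) unfolding MST_at_def by auto
      then have "g \<in> Bh \<alpha>" using ete by (intro Bmem[THEN iffD2] disjI1) simp
      then show "g \<in> Bleq \<alpha> (ent e)" using \<open>ent g \<le> ent e\<close> unfolding Bleq_def by simp
    qed
    have Arest: "A - {e} \<in> spn (Q \<alpha>) (Bleq \<alpha> (ent e))"
    proof (rule spn_sum[OF finQ])
      show "finite (A - {e})" using fA by simp
      show "\<forall>f\<in>A - {e}. {f} \<in> spn (Q \<alpha>) (Bleq \<alpha> (ent e))"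
      proof
        fix f assume f: "f \<in> A - {e}"
        have fD: "f \<notin> D t" using f A(2) by blast
        have fu: "f \<in> unassigned S ent T dth t" using f Aun by blast
        then have fc: "f \<in> cand S T" and eft: "ent f \<le> t" and ge: "\<forall>t'. dth f = Some t' \<longrightarrow> t \<le> t'"
          unfolding unassigned_def by auto
        have fe: "ent f \<le> ent e" using entA f by blast
        show "{f} \<in> spn (Q \<alpha>) (Bleq \<alpha> (ent e))"
        proof (cases "\<exists>t'. dth f = Some t' \<and> t' \<le> \<alpha>")
          case True
          then obtain t' where t': "dth f = Some t'" "t' \<le> \<alpha>" by blast
          have tt: "t < t'" using ge t' fD fc by force
          have sub: "{g\<in>cand S T. \<exists>t''. dth g = Some t'' \<and> t' < t'' \<and> t'' \<le> \<alpha>}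
              \<subset> {g\<in>cand S T. \<exists>t''. dth g = Some t'' \<and> t < t'' \<and> t'' \<le> \<alpha>}"
          proof
            show "{g\<in>cand S T. \<exists>t''. dth g = Some t'' \<and> t' < t'' \<and> t'' \<le> \<alpha>}
              \<subseteq> {g\<in>cand S T. \<exists>t''. dth g = Some t'' \<and> t < t'' \<and> t'' \<le> \<alpha>}" using tt by force
            have "f \<in> {g\<in>cand S T. \<exists>t''. dth g = Some t'' \<and> t < t'' \<and> t'' \<le> \<alpha>}" using fc t' tt by blast
            moreover have "f \<notin> {g\<in>cand S T. \<exists>t''. dth g = Some t'' \<and> t' < t'' \<and> t'' \<le> \<alpha>}" using t' by auto
            ultimately show "{g\<in>cand S T. \<exists>t''. dth g = Some t'' \<and> t' < t'' \<and> t'' \<le> \<alpha>}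
              \<noteq> {g\<in>cand S T. \<exists>t''. dth g = Some t'' \<and> t < t'' \<and> t'' \<le> \<alpha>}" by blast
          qed
          have "Nd \<alpha> t' < n" unfolding Nn[symmetric] Nd_def
            by (rule psubset_card_mono[OF _ sub]) (use cand_fin in simp)
          then have "{f} \<in> spn (Q \<alpha>) (Bleq \<alpha> (ent f))" using less.IH fc t' by blast
          moreover have "Bleq \<alpha> (ent f) \<subseteq> Bleq \<alpha> (ent e)" using fe unfolding Bleq_def by auto
          ultimately show ?thesis using spn_mono by blast
        next
          case False
          then have "\<forall>t'. dth f = Some t' \<longrightarrow> \<alpha> < t'" by force
          then have "f \<in> Bh \<alpha>" using Bmem fc eft ta by force
          then have "{f} \<subseteq> Bleq \<alpha> (ent e)" using fe unfolding Bleq_def by auto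
          then show ?thesis by (rule spn_sub)
        qed
      qed
    qed
    have "sd m (bd d) \<in> spn (Q \<alpha>) (Bleq \<alpha> (ent e))"
    proof (rule spn_sd[OF finQ])
      show "m \<in> spn (Q \<alpha>) (Bleq \<alpha> (ent e))" using msub by (rule spn_sub)
      have "bd d \<in> Bdr (Q \<alpha>)" unfolding Bdr_def using dta by blast
      then show "bd d \<in> spn (Q \<alpha>) (Bleq \<alpha> (ent e))" by (rule spn_Bdr)
    qed
    then have "sd (A - {e}) (sd m (bd d)) \<in> spn (Q \<alpha>) (Bleq \<alpha> (ent e))"
      using Arest spn_sd[OF finQ] by blast
    moreover have "{e} = sd (A - {e}) (sd m (bd d))" using sd_recover[OF eA m_def] .
    ultimately show "{e} \<in> spn (Q \<alpha>) (Bleq \<alpha> (ent e))" by simp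
  qed
qed

lemma expand:
  assumes "e \<in> edges_of (Q \<alpha>)"
  shows "{e} \<in> spn (Q \<alpha>) (Bleq \<alpha> (ent e))"
proof -
  have eS: "e \<in> edges_of S" "ent e \<le> \<alpha>" using assms unfolding edges_Q by auto
  show ?thesis
  proof (cases "e \<in> Bh \<alpha>")
    case True
    then have "{e} \<subseteq> Bleq \<alpha> (ent e)" unfolding Bleq_def by simp
    then show ?thesis by (rule spn_sub)
  next
    case False
    have "e \<notin> T"
    proof
      assume "e \<in> T"
      then have "e \<in> Bh \<alpha>" using Bmem[THEN iffD2] eS(2) by blast
      then show False using False by simp
    qed
    then have ec: "e \<in> cand S T" using eS unfolding cand_def by blast
    have "\<not> (\<forall>t. dth e = Some t \<longrightarrow> \<alpha> < t)"
    proof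
      assume "\<forall>t. dth e = Some t \<longrightarrow> \<alpha> < t"
      then have "e \<in> Bh \<alpha>" using Bmem[THEN iffD2] eS(2) ec by blast
      then show False using False by simp
    qed
    then obtain t where t: "dth e = Some t" "t \<le> \<alpha>" by auto
    show ?thesis using expand_dead[of \<alpha> "Nd \<alpha> t"] ec t by blast
  qed
qed

lemma Bcand: "f \<in> Bh \<alpha> \<Longrightarrow> f \<in> cand S T \<Longrightarrow> ent f \<le> \<alpha> \<and> (\<forall>t. dth f = Some t \<longrightarrow> \<alpha> < t)"
proof -
  assume a: "f \<in> Bh \<alpha>" "f \<in> cand S T"
  have "f \<notin> T" using a(2) by (rule cand_T)
  then show ?thesis using Bmem[THEN iffD1, OF a(1)] by blast
qed

lemma Bncand: "f \<in> Bh \<alpha> \<Longrightarrow> f \<notin> cand S T \<Longrightarrow> f \<in> T \<and> ent f \<le> \<alpha>"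
  using Bmem[THEN iffD1] by blast

lemma B_indep: "indep (Q \<alpha>) (Bh \<alpha>)"
  unfolding indep_def
proof (intro allI impI)
  fix Y assume YB: "Y \<subseteq> Bh \<alpha>" and YBd: "Y \<in> Bdr (Q \<alpha>)"
  obtain d where d: "Y = bd d" "d \<subseteq> tris_of (Q \<alpha>)" using YBd unfolding Bdr_def by blast
  let ?K = "kerf S ent T dth \<alpha>"
  define K where "K = Y \<inter> cand S T"
  have Kun: "K \<subseteq> unassigned S ent T dth \<alpha>"
  proof
    fix f assume "f \<in> K"
    then have fc: "f \<in> cand S T" "f \<in> Bh \<alpha>" using YB unfolding K_def by auto
    have "ent f \<le> \<alpha> \<and> (\<forall>t. dth f = Some t \<longrightarrow> \<alpha> < t)" using Bcand fc by blast
    then show "f \<in> unassigned S ent T dth \<alpha>" using fc(1) unfolding unassigned_def by force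
  qed
  have YT: "Y - K \<subseteq> MST_at ent T \<alpha>"
  proof
    fix f assume "f \<in> Y - K"
    then have "f \<notin> cand S T" "f \<in> Bh \<alpha>" using YB unfolding K_def by auto
    then have "f \<in> T \<and> ent f \<le> \<alpha>" by (rule Bncand[rotated])
    then show "f \<in> MST_at ent T \<alpha>" unfolding MST_at_def by simp
  qed
  have "sd K Y = Y - K" unfolding K_def by blast
  then have "sd K (bd d) \<subseteq> MST_at ent T \<alpha>" using YT d(1) by simp
  then have KK: "K \<in> ?K" unfolding kerf_def using Kun d(2) by blast
  have KD: "K \<inter> D \<alpha> = {} \<inter> D \<alpha>"
  proof -
    have "dth f \<noteq> Some \<alpha>" if "f \<in> K" for f
    proof -
      have "f \<in> cand S T" "f \<in> Bh \<alpha>" using that YB unfolding K_def by auto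
      then have "\<forall>t. dth f = Some t \<longrightarrow> \<alpha> < t" using Bcand by blast
      then show ?thesis by auto
    qed
    then show ?thesis by blast
  qed
  have bij: "bij_betw (\<lambda>A. A \<inter> D \<alpha>) ?K (Pow (D \<alpha>))" using Dfacts(2) unfolding leading_def by blast
  have K0: "K = {}" using inj_onD[OF bij_betw_imp_inj_on[OF bij] KD KK kerf_empty] .
  have YsT: "Y \<subseteq> T"
  proof
    fix f assume "f \<in> Y"
    moreover have "Y \<inter> cand S T = {}" using K0 unfolding K_def .
    ultimately have "f \<notin> cand S T" by blast
    moreover have "f \<in> Bh \<alpha>" using YB \<open>f \<in> Y\<close> by blast
    ultimately show "f \<in> T" using Bncand by blast
  qed
  have bY: "bd Y = {}" unfolding d(1) by (rule bd_bd_tris[OF d(2)])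
  have "Y \<subseteq> edges_of (Q \<alpha>)" using YB B_sub by blast
  then have "finite Y" using finEQ by (rule finite_subset)
  then show "Y = {}" using tree_acyclic[OF ST YsT _ bY] by simp
qed

end

lemma sd_swap: "X = sd z Z \<Longrightarrow> Z = sd z X" by blast

lemma card_split:
  fixes w :: "'b \<Rightarrow> real"
  assumes "finite X"
  shows "card {x\<in>X. s \<le> w x} + card {x\<in>X. w x < s} = card X"
proof -
  have "{x\<in>X. s \<le> w x} \<union> {x\<in>X. w x < s} = X" by auto
  moreover have "{x\<in>X. s \<le> w x} \<inter> {x\<in>X. w x < s} = {}" by auto
  ultimately show ?thesis using assms card_Un_disjoint[of "{x\<in>X. s \<le> w x}" "{x\<in>X. w x < s}"] by simp
qed

lemma indep_mono: "indep K X \<Longrightarrow> Y \<subseteq> X \<Longrightarrow> indep K Y"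
  unfolding indep_def by blast

context hs begin

lemma spn_B: "e \<in> edges_of (Q \<alpha>) \<Longrightarrow> {e} \<in> spn (Q \<alpha>) (Bh \<alpha>)"
proof -
  assume "e \<in> edges_of (Q \<alpha>)"
  then have "{e} \<in> spn (Q \<alpha>) (Bleq \<alpha> (ent e))" by (rule expand)
  moreover have "Bleq \<alpha> (ent e) \<subseteq> Bh \<alpha>" unfolding Bleq_def by blast
  ultimately show ?thesis using spn_mono by blast
qed

lemma main:
  "spans C (Bh \<alpha>) (Q \<alpha>) \<and> H1_iso (Bh \<alpha>) (Q \<alpha>) \<and>
   (\<forall>G. spans C G (Q \<alpha>) \<and> H1_iso G (Q \<alpha>) \<longrightarrow> total_len ent (Bh \<alpha>) \<le> total_len ent G)"
proof (intro conjI allI impI)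
  let ?E = "edges_of (Q \<alpha>)"
  let ?B = "Bh \<alpha>"
  have finB: "finite ?B" using B_sub finEQ finite_subset by blast
  show "spans C ?B (Q \<alpha>)"
    unfolding spans_def
  proof (intro conjI ballI impI)
    show "?B \<subseteq> ?E" by (rule B_sub)
    fix u v assume "u \<in> C" "v \<in> C" "conn ?E u v"
    show "conn ?B u v"
    proof (rule conn_lift[OF _ \<open>conn ?E u v\<close>], intro ballI allI impI)
      fix \<sigma> x y assume s: "\<sigma> \<in> ?E" "\<sigma> = {x, y}"
      have ss: "\<sigma> \<in> edges_of S" "ent \<sigma> \<le> \<alpha>" using s(1) unfolding edges_Q by auto
      have c1: "conn (MST_at ent T \<alpha>) x y" using mst_conn[OF F M ss s(2)] .
      have sub: "MST_at ent T \<alpha> \<subseteq> ?B"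
      proof
        fix g assume "g \<in> MST_at ent T \<alpha>"
        then have "g \<in> T \<and> ent g \<le> \<alpha>" unfolding MST_at_def by simp
        then show "g \<in> ?B" by (intro Bmem[THEN iffD2] disjI1)
      qed
      show "conn ?B x y" using conn_mono[OF sub c1] .
    qed
  qed
  show "H1_iso ?B (Q \<alpha>)"
    unfolding H1_iso_def
  proof (intro conjI allI impI)
    fix z assume z: "z \<subseteq> ?B \<and> bd z = {} \<and> (\<exists>d. d \<subseteq> tris_of (Q \<alpha>) \<and> bd d = z)"
    then have "z \<in> Bdr (Q \<alpha>)" unfolding Bdr_def by blast
    then show "z = {}" using B_indep z unfolding indep_def by blast
  next
    fix z assume z: "z \<subseteq> ?E \<and> bd z = {}"
    have fz: "finite z" using z finEQ finite_subset by blast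
    have "z \<in> spn (Q \<alpha>) ?B" using spn_sum[OF finQ fz] spn_B z by blast
    then obtain Z where Z: "Z \<subseteq> ?B" "sd z Z \<in> Bdr (Q \<alpha>)" unfolding spn_iff by blast
    then obtain d where d: "sd z Z = bd d" "d \<subseteq> tris_of (Q \<alpha>)" unfolding Bdr_def by blast
    have Zeq: "Z = sd z (bd d)" using sd_swap[OF d(1)[symmetric]] .
    have "bd Z = sd (bd z) (bd (bd d))" unfolding Zeq using fz bd_tris_fin[OF d(2)] by (rule bd_sd)
    also have "\<dots> = {}" using z bd_bd_tris[OF d(2)] by simp
    finally have bZ: "bd Z = {}" .
    show "\<exists>c. c \<subseteq> ?B \<and> bd c = {} \<and> (\<exists>d. d \<subseteq> tris_of (Q \<alpha>) \<and> bd d = (z - c) \<union> (c - z))"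
      using Z(1) bZ d by (intro exI[of _ Z] conjI exI[of _ d]) auto
  qed
    fix G assume G: "spans C G (Q \<alpha>) \<and> H1_iso G (Q \<alpha>)"
    have GE: "G \<subseteq> ?E" using G unfolding spans_def by blast
    have finG: "finite G" using GE finEQ finite_subset by blast
    have Ginj: "\<And>z. z \<subseteq> G \<Longrightarrow> bd z = {} \<Longrightarrow> (\<exists>d. d \<subseteq> tris_of (Q \<alpha>) \<and> bd d = z) \<Longrightarrow> z = {}"
      using G unfolding H1_iso_def by blast
    have Gsurj: "\<And>z. z \<subseteq> ?E \<Longrightarrow> bd z = {} \<Longrightarrow>
        \<exists>c. c \<subseteq> G \<and> bd c = {} \<and> (\<exists>d. d \<subseteq> tris_of (Q \<alpha>) \<and> bd d = sd z c)"
      using G unfolding H1_iso_def by blast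
    have Gconn: "\<And>u v. u \<in> C \<Longrightarrow> v \<in> C \<Longrightarrow> conn ?E u v \<Longrightarrow> conn G u v"
      using G unfolding spans_def by blast
    have indG: "indep (Q \<alpha>) G"
      unfolding indep_def
    proof (intro allI impI)
      fix Y assume Y: "Y \<subseteq> G" "Y \<in> Bdr (Q \<alpha>)"
      then obtain d where d: "Y = bd d" "d \<subseteq> tris_of (Q \<alpha>)" unfolding Bdr_def by blast
      have "bd Y = {}" unfolding d(1) by (rule bd_bd_tris[OF d(2)])
      then show "Y = {}" using Ginj[OF Y(1)] d by blast
    qed
    have spnG: "{e} \<in> spn (Q \<alpha>) G" if eE: "e \<in> ?E" for e
    proof -
      have eS: "e \<in> edges_of S" using eE unfolding edges_Q by auto
      obtain u v where uv: "e = {u, v}" "u \<noteq> v" using edges_card[OF eS] by (meson card_2_iff)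
      have "e \<subseteq> C" using eS F unfolding filtration_def edges_of_def by auto
      then have uvC: "u \<in> C" "v \<in> C" using uv by auto
      have "conn ?E u v" using eE uv(1) conn_edge by metis
      then have "conn G u v" using Gconn uvC by blast
      moreover have G2: "\<forall>\<sigma>\<in>G. card \<sigma> = 2" using GE edges_card by blast
      ultimately obtain p where p: "p \<subseteq> G" "finite p" "bd p = ends u v" using conn_chain by meson
      have bp: "bd p = bd {e}" using p(3) uv by (simp add: ends_def bd_edge)
      define z where "z = sd p {e}"
      have zE: "z \<subseteq> ?E" using p(1) GE eE unfolding z_def by blast
      have "bd z = sd (bd p) (bd {e})" unfolding z_def using p(2) by (intro bd_sd) auto
      then have bz: "bd z = {}" using bp by simp
      obtain c d where c: "c \<subseteq> G" "d \<subseteq> tris_of (Q \<alpha>)" "bd d = sd z c"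
        using Gsurj[OF zE bz] by blast
      have "{e} = sd (sd p c) (bd d)" using sd_recover2[OF c(3)[unfolded z_def]] .
      moreover have "sd p c \<subseteq> G" using p(1) c(1) by blast
      moreover have "bd d \<in> Bdr (Q \<alpha>)" unfolding Bdr_def using c(2) by blast
      ultimately show ?thesis unfolding spn_def by blast
    qed
    have cBG: "card ?B \<le> card G"
      using dim_le[OF finQ finG finB B_indep] spnG B_sub by blast
    have lt: "card {x\<in>G. ent x < s} \<le> card {x\<in>?B. ent x < s}" for s
    proof (rule dim_le[OF finQ])
      show "finite {x\<in>?B. ent x < s}" "finite {x\<in>G. ent x < s}" using finB finG by auto
      show "indep (Q \<alpha>) {x\<in>G. ent x < s}" using indG by (rule indep_mono) auto
      show "\<forall>y\<in>{x\<in>G. ent x < s}. {y} \<in> spn (Q \<alpha>) {x\<in>?B. ent x < s}"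
      proof
        fix y assume y: "y \<in> {x\<in>G. ent x < s}"
        then have "{y} \<in> spn (Q \<alpha>) (Bleq \<alpha> (ent y))" using expand GE by blast
        moreover have "Bleq \<alpha> (ent y) \<subseteq> {x\<in>?B. ent x < s}" using y unfolding Bleq_def by auto
        ultimately show "{y} \<in> spn (Q \<alpha>) {x\<in>?B. ent x < s}" using spn_mono by blast
      qed
    qed
    have ge: "\<forall>s. card {x\<in>?B. ent x \<ge> s} \<le> card {x\<in>G. ent x \<ge> s}"
    proof
      fix s
      have "card {x\<in>?B. ent x \<ge> s} + card {x\<in>?B. ent x < s} = card ?B" using card_split[OF finB] .
      moreover have "card {x\<in>G. ent x \<ge> s} + card {x\<in>G. ent x < s} = card G" using card_split[OF finG] .
      ultimately show "card {x\<in>?B. ent x \<ge> s} \<le> card {x\<in>G. ent x \<ge> s}" using lt[of s] cBG by linarith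
    qed
    have nn: "\<forall>x\<in>?B \<union> G. ent x \<ge> 0"
    proof
      fix x assume "x \<in> ?B \<union> G"
      then have "x \<in> edges_of S" using B_sub GE unfolding edges_Q by blast
      then show "ent x \<ge> 0" using ent_pos by (simp add: less_imp_le)
    qed
    have "sum ent ?B \<le> sum ent G" using weight_le[OF finB finG nn ge] .
    then show "total_len ent ?B \<le> total_len ent G"
      unfolding total_len_def by (simp add: sum_distrib_left[symmetric])
qed

end

theorem mainTheorem9:
  fixes C :: "'a::metric_space set"
    and S :: "'a set set"
    and ent :: "'a set \<Rightarrow> real"
    and T :: "'a set set"
    and dth :: "'a set \<Rightarrow> real option"
    and \<alpha> :: real
  assumes "filtration C S ent"
    and "is_MST C S ent T"
    and "valid_deaths S ent T dth"
    and "\<alpha> > 0"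
  shows "spans C (HoPeS_at S ent T dth \<alpha>) (Qf S ent \<alpha>) \<and>
         H1_iso (HoPeS_at S ent T dth \<alpha>) (Qf S ent \<alpha>) \<and>
         (\<forall>G. spans C G (Qf S ent \<alpha>) \<and> H1_iso G (Qf S ent \<alpha>) \<longrightarrow>
              total_len ent (HoPeS_at S ent T dth \<alpha>) \<le> total_len ent G)"
proof -
  interpret hs C S ent T dth by unfold_locales (rule assms)+
  show ?thesis by (rule main)
qed

end
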